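(* Let $n\geqslant2$, $i_0,j_0\in\{0,\dots,n\}$, $x_{i_0},y_{j_0}\in\mathbf{Z}$, $\boldsymbol{c}\in\mathbf{Z}^{n+1}$ and $q\geqslant1$. For $(a_i)_{i\neq i_0},(a'_j)_{j\neq j_0}\in(\mathbf{Z}/q\mathbf{Z})^n$ let $\boldsymbol{a}\in(\mathbf{Z}/q\mathbf{Z})^{n+1}$ have coordinates $a_i$ ($i\neq i_0$) and $x_{i_0}\bmod q$ at $i_0$, and $\boldsymbol{a}'$ have coordinates $a'_j$ ($j\neq j_0$) and $y_{j_0}\bmod q$ at $j_0$. Then for every $\eta>0$, \[\sum_{\substack{(a_i)_{i\neq i_0}\in(\mathbf{Z}/q\mathbf{Z})^n\\(a'_j)_{j\neq j_0}\in(\mathbf{Z}/q\mathbf{Z})^n}}|S_q(\boldsymbol{a},\boldsymbol{a}')(\boldsymbol{c})|\ll q^{3+2n+\eta},\] the implied constant depending only on $n$ and $\eta$.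
   Context: $e_q(x)=\exp(2i\pi x/q)$ and $S_q(\boldsymbol{a},\boldsymbol{a}')(\boldsymbol{c})=\sum_{d\in(\mathbf{Z}/q\mathbf{Z})^*}\sum_{\boldsymbol{b}\in(\mathbf{Z}/q\mathbf{Z})^{n+1}}e_q\big(d\sum_ka_ka'_kb_k+\boldsymbol{c}.\boldsymbol{b}\big)$. *)

theory Defs
  imports Complex_Main "HOL-Library.FuncSet"
begin

text \<open>Residues mod q are represented by integers in {0..<q}.
  Vectors in (Z/qZ)^(n+1) are functions nat => int on {0..n}.\<close>

definition e_q :: "nat \<Rightarrow> int \<Rightarrow> complex" where
  "e_q q x = exp (2 * pi * \<i> * of_int x / of_nat q)"

definition units_mod :: "nat \<Rightarrow> int set" where
  "units_mod q = {d \<in> {0..<int q}. coprime d (int q)}"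

definition S_q :: "nat \<Rightarrow> nat \<Rightarrow> (nat \<Rightarrow> int) \<Rightarrow> (nat \<Rightarrow> int) \<Rightarrow> (nat \<Rightarrow> int) \<Rightarrow> complex" where
  "S_q q n a a' c =
     (\<Sum>d\<in>units_mod q. \<Sum>b\<in>PiE {..n} (\<lambda>_. {0..<int q}).
        e_q q (d * (\<Sum>k\<le>n. a k * a' k * b k) + (\<Sum>k\<le>n. c k * b k)))"

end

theory Submission
  imports Defs "HOL-Analysis.Analysis" "HOL-Computational_Algebra.Primes"
begin


lemma div_gcd_dvd_aux:
  fixes a b d :: nat assumes d: "d dvd a*b" and "a > 0"
  shows "d div gcd d a dvd b"
proof -
  let ?g = "gcd d a"
  have g0: "?g > 0" using assms by simp
  have cop: "coprime (d div ?g) (a div ?g)" using g0 by (simp add: div_gcd_coprime)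
  have "d div ?g dvd (a div ?g) * b"
  proof -
    have e1: "?g * (d div ?g) = d" by simp
    have e2: "?g * (a div ?g) = a" by simp
    have "?g * (d div ?g) dvd ?g * ((a div ?g) * b)"
      using d e1 e2 by (metis mult.assoc)
    then show ?thesis using g0 nat_mult_dvd_cancel1 by blast
  qed
  then show ?thesis using cop by (simp add: coprime_dvd_mult_right_iff)
qed

lemma tau_submult:
  fixes a b :: nat assumes "a>0" "b>0"
  shows "card {d. d dvd a*b} \<le> card {d. d dvd a} * card {d. d dvd b}"
proof -
  have "card {d. d dvd a*b} \<le> card ({d. d dvd a} \<times> {d. d dvd b})"
  proof (rule card_inj_on_le[where f="\<lambda>d. (gcd d a, d div gcd d a)"])
    show "inj_on (\<lambda>d. (gcd d a, d div gcd d a)) {d. d dvd a * b}"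
      by (intro inj_onI) (metis dvd_mult_div_cancel gcd_dvd1 prod.inject)
    show "(\<lambda>d. (gcd d a, d div gcd d a)) ` {d. d dvd a * b} \<subseteq> {d. d dvd a} \<times> {d. d dvd b}"
      using div_gcd_dvd_aux assms by auto
    show "finite ({d. d dvd a} \<times> {d. d dvd b})" using assms by (simp add: finite_divisors_nat)
  qed
  then show ?thesis by (simp add: card_cartesian_product)
qed

lemma tau_primepow:
  fixes p :: nat assumes "prime p"
  shows "card {d. d dvd p^k} \<le> k+1"
proof -
  have "{d. d dvd p^k} = (\<lambda>i. p^i) ` {..k}"
    using divides_primepow_nat[OF assms] by auto
  then have "card {d. d dvd p^k} \<le> card {..k}" by (metis card_image_le finite_atMost)
  then show ?thesis by simp
qed



lemma lin_le_exp_aux: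
  fixes \<epsilon> :: real assumes "\<epsilon> > 0"
  defines "M \<equiv> max 1 (1 / (\<epsilon> * ln 2))"
  shows "real (k+1) \<le> M * 2 powr (real k * \<epsilon>)"
proof -
  have l2: "ln (2::real) > 0" by simp
  have "2 powr (real k * \<epsilon>) = exp (real k * \<epsilon> * ln 2)" by (simp add: powr_def)
  also have "\<dots> \<ge> 1 + real k * \<epsilon> * ln 2" by (rule exp_ge_add_one_self)
  finally have e: "2 powr (real k * \<epsilon>) \<ge> 1 + real k * \<epsilon> * ln 2" .
  have M1: "M \<ge> 1" by (simp add: M_def)
  have "M \<ge> 1 / (\<epsilon> * ln 2)" by (simp add: M_def)
  then have "M * (\<epsilon> * ln 2) \<ge> 1 / (\<epsilon> * ln 2) * (\<epsilon> * ln 2)"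
    by (rule mult_right_mono) (use assms l2 in auto)
  then have M2: "M * (\<epsilon> * ln 2) \<ge> 1" using assms l2 by simp
  have "real (k+1) = 1 + real k * 1" by simp
  also have "\<dots> \<le> M + real k * (M * (\<epsilon> * ln 2))"
    using M1 M2 by (intro add_mono mult_left_mono) auto
  also have "\<dots> = M * (1 + real k * \<epsilon> * ln 2)" by (simp add: algebra_simps)
  also have "\<dots> \<le> M * 2 powr (real k * \<epsilon>)" using e M1 by (intro mult_left_mono) auto
  finally show ?thesis .
qed

lemma tau_bound_aux:
  fixes \<epsilon> M :: real assumes eps: "\<epsilon> > 0" and M1: "M \<ge> 1"
    and MK: "\<And>k. real (k+1) \<le> M * 2 powr (real k * \<epsilon>)"
  shows "q > 0 \<Longrightarrow> real (card {d. d dvd q}) \<le>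
     M ^ card {p. prime p \<and> p dvd q \<and> real p powr \<epsilon> < 2} * real q powr \<epsilon>"
proof (induction q rule: less_induct)
  case (less q)
  define S where "S x = {p. prime p \<and> p dvd x \<and> real p powr \<epsilon> < 2}" for x :: nat
  show ?case
  proof (cases "q = 1")
    case True
    have e: "{p. prime p \<and> p dvd q \<and> real p powr \<epsilon> < 2} = {}" using True by auto
    show ?thesis unfolding e using True by simp
  next
    case False
    then obtain p where p: "prime p" "p dvd q" using prime_factor_nat by blast
    define k where "k = multiplicity p q"
    define m where "m = q div p ^ k"
    have qm: "q = p^k * m" unfolding m_def k_def using multiplicity_dvd[of p q] by simp
    have ndvd: "\<not> p dvd m" unfolding m_def k_def
      by (rule multiplicity_decompose) (use p less.prems in \<open>auto simp: prime_elem_def\<close>)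
    have k1: "k \<ge> 1" unfolding k_def using p less.prems
      by (simp add: prime_multiplicity_gt_zero_iff Suc_le_eq)
    have p2: "p \<ge> 2" using p prime_ge_2_nat by blast
    have pk: "p^k \<ge> 2"
    proof -
      have "p^1 \<le> p^k" using k1 p2 by (intro power_increasing) auto
      then show ?thesis using p2 by simp
    qed
    have m0: "m > 0" using qm less.prems by (metis gr0I mult_0_right)
    have mq: "m < q" using qm pk m0 by simp
    have IH: "real (card {d. d dvd m}) \<le> M ^ card (S m) * real m powr \<epsilon>"
      using less.IH[OF mq m0] unfolding S_def .
    have finS: "finite (S q)" unfolding S_def using less.prems
      by (rule finite_subset[rotated, OF finite_divisors_nat[of q]]) auto
    have Ssub: "S m \<subseteq> S q" unfolding S_def using qm by auto
    have pnot: "p \<notin> S m" unfolding S_def using ndvd by auto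
    have tq: "real (card {d. d dvd q}) \<le> real (k+1) * real (card {d. d dvd m})"
    proof -
      have "card {d. d dvd q} \<le> card {d. d dvd p^k} * card {d. d dvd m}"
        using qm tau_submult[of "p^k" m] m0 p2 by simp
      also have "\<dots> \<le> (k+1) * card {d. d dvd m}"
        using tau_primepow[OF p(1), of k] by (intro mult_right_mono) auto
      finally show ?thesis by (metis of_nat_le_iff of_nat_mult)
    qed
    have qpow: "real q powr \<epsilon> = p powr (real k * \<epsilon>) * real m powr \<epsilon>"
      using p2 by (simp add: qm powr_mult powr_realpow[symmetric] powr_powr mult.commute)
    have pge: "p powr (real k * \<epsilon>) \<ge> 2 powr (real k * \<epsilon>)"
      using p2 eps by (intro powr_mono2) auto
    have Mpos: "M ^ card (S m) \<ge> 0" using M1 by simp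
    have mpos: "real m powr \<epsilon> \<ge> 0" by simp
    show ?thesis
    proof (cases "real p powr \<epsilon> < 2")
      case True
      then have "p \<in> S q" unfolding S_def using p by auto
      then have "card (insert p (S m)) \<le> card (S q)" using Ssub finS by (intro card_mono) auto
      then have cc: "card (S m) + 1 \<le> card (S q)" using pnot finS Ssub
        by (metis Suc_eq_plus1 card_insert_disjoint finite_subset)
      have "real (card {d. d dvd q}) \<le> real (k+1) * (M ^ card (S m) * real m powr \<epsilon>)"
        using tq IH by (meson mult_left_mono of_nat_0_le_iff order_trans)
      also have "\<dots> \<le> (M * p powr (real k * \<epsilon>)) * (M ^ card (S m) * real m powr \<epsilon>)"
        using MK[of k] pge M1 Mpos mpos
        by (intro mult_right_mono) (auto intro: order_trans mult_left_mono)
      also have "\<dots> = M ^ (card (S m) + 1) * real q powr \<epsilon>" by (simp add: qpow)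
      also have "\<dots> \<le> M ^ card (S q) * real q powr \<epsilon>"
        using cc M1 by (intro mult_right_mono power_increasing) auto
      finally show ?thesis unfolding S_def .
    next
      case False
      then have pe: "real p powr \<epsilon> \<ge> 2" by simp
      have "real (k+1) \<le> 2 ^ k" by (induction k) auto
      also have "\<dots> \<le> (real p powr \<epsilon>) ^ k" using pe by (intro power_mono) auto
      also have "\<dots> = p powr (real k * \<epsilon>)" using p2
        by (simp add: powr_realpow[symmetric] powr_powr mult.commute)
      finally have kp: "real (k+1) \<le> p powr (real k * \<epsilon>)" .
      have "real (card {d. d dvd q}) \<le> real (k+1) * (M ^ card (S m) * real m powr \<epsilon>)"
        using tq IH by (meson mult_left_mono of_nat_0_le_iff order_trans)
      also have "\<dots> \<le> p powr (real k * \<epsilon>) * (M ^ card (S m) * real m powr \<epsilon>)"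
        using kp Mpos mpos by (intro mult_right_mono) auto
      also have "\<dots> = M ^ card (S m) * real q powr \<epsilon>" by (simp add: qpow)
      also have "\<dots> \<le> M ^ card (S q) * real q powr \<epsilon>"
        using Ssub finS M1 by (intro mult_right_mono power_increasing card_mono) auto
      finally show ?thesis unfolding S_def .
    qed
  qed
qed

lemma tau_bound:
  fixes \<epsilon> :: real assumes eps: "\<epsilon> > 0"
  shows "\<exists>C\<ge>1. \<forall>q>0. real (card {d. d dvd q}) \<le> C * real q powr \<epsilon>"
proof -
  define M where "M = max 1 (1 / (\<epsilon> * ln 2))"
  have M1: "M \<ge> 1" by (simp add: M_def)
  have MK: "\<And>k. real (k+1) \<le> M * 2 powr (real k * \<epsilon>)"
    unfolding M_def using eps by (rule lin_le_exp_aux)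
  define N where "N = nat \<lceil>2 powr (1/\<epsilon>)\<rceil>"
  have sub: "{p. prime p \<and> p dvd q \<and> real p powr \<epsilon> < 2} \<subseteq> {..<N}" for q
  proof clarify
    fix p :: nat assume h: "prime p" "real p powr \<epsilon> < 2"
    show "p < N"
    proof (rule ccontr)
      assume "\<not> p < N"
      then have "real p \<ge> 2 powr (1/\<epsilon>)" unfolding N_def by linarith
      then have "real p powr \<epsilon> \<ge> (2 powr (1/\<epsilon>)) powr \<epsilon>"
        using eps by (intro powr_mono2) auto
      also have "(2 powr (1/\<epsilon>)) powr \<epsilon> = 2" using eps by (simp add: powr_powr)
      finally show False using h by simp
    qed
  qed
  show ?thesis
  proof (intro exI[of _ "M^N"] conjI allI impI)
    show "1 \<le> M ^ N" using M1 by simp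
    fix q :: nat assume q: "q > 0"
    have "real (card {d. d dvd q}) \<le>
     M ^ card {p. prime p \<and> p dvd q \<and> real p powr \<epsilon> < 2} * real q powr \<epsilon>"
      using tau_bound_aux[OF eps M1 MK q] .
    also have "\<dots> \<le> M ^ N * real q powr \<epsilon>"
    proof (intro mult_right_mono power_increasing)
      show "card {p. prime p \<and> p dvd q \<and> real p powr \<epsilon> < 2} \<le> N"
        using card_mono[OF finite_lessThan sub[of q]] by simp
    qed (use M1 in auto)
    finally show "real (card {d. d dvd q}) \<le> M ^ N * real q powr \<epsilon>" .
  qed
qed



lemma gcd_sum_nat:
  fixes q :: nat assumes q: "q > 0"
  shows "(\<Sum>t<q. gcd t q) \<le> q * card {d. d dvd q}"
proof -
  define D where "D = {d. d dvd q}"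
  have finD: "finite D" unfolding D_def using q by (simp add: finite_divisors_nat)
  have "(\<Sum>t<q. gcd t q) \<le> (\<Sum>t<q. \<Sum>g\<in>D. if g dvd t then g else 0)"
  proof (intro sum_mono)
    fix t assume "t \<in> {..<q}"
    have "gcd t q \<in> D" unfolding D_def by simp
    then have "(\<Sum>g\<in>D. if g dvd t then g else 0) = (if gcd t q dvd t then gcd t q else 0) +
       (\<Sum>g\<in>D - {gcd t q}. if g dvd t then g else 0)"
      using finD by (simp add: sum.remove)
    then show "gcd t q \<le> (\<Sum>g\<in>D. if g dvd t then g else 0)" by simp
  qed
  also have "\<dots> = (\<Sum>g\<in>D. \<Sum>t<q. if g dvd t then g else 0)" by (rule sum.swap)
  also have "\<dots> \<le> (\<Sum>g\<in>D. q)"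
  proof (intro sum_mono)
    fix g assume g: "g \<in> D"
    then have gq: "g dvd q" unfolding D_def by simp
    have g0: "g > 0" using gq q by (metis dvd_0_left_iff gr0I less_irrefl)
    have "(\<Sum>t<q. if g dvd t then g else 0) = (\<Sum>t\<in>{t\<in>{..<q}. g dvd t}. g)"
      by (rule sum.inter_filter[symmetric]) simp
    also have "\<dots> = g * card {t\<in>{..<q}. g dvd t}" by simp
    also have "card {t\<in>{..<q}. g dvd t} \<le> card ((\<lambda>j. g*j) ` {..<q div g})"
    proof (intro card_mono)
      show "{t \<in> {..<q}. g dvd t} \<subseteq> (\<lambda>j. g * j) ` {..<q div g}"
      proof clarify
        fix t assume t: "t < q" "g dvd t"
        then obtain j where j: "t = g*j" by blast
        have "g * j < g * (q div g)" using t j gq by simp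
        then have "j < q div g" by simp
        then show "t \<in> (\<lambda>j. g * j) ` {..<q div g}" using j by blast
      qed
    qed auto
    also have "\<dots> \<le> q div g" using card_image_le[of "{..<q div g}" "\<lambda>j. g*j"] by simp
    finally have "(\<Sum>t<q. if g dvd t then g else 0) \<le> g * (q div g)"
      by (simp add: mult_left_mono)
    also have "\<dots> = q" using gq by simp
    finally show "(\<Sum>t<q. if g dvd t then g else 0) \<le> q" .
  qed
  also have "\<dots> = q * card D" by simp
  finally show ?thesis unfolding D_def .
qed

lemma count_lin_cong:
  fixes q :: nat and m cc :: int assumes q: "q > 0"
  shows "card {s\<in>{0..<int q}. int q dvd (m * s + cc)} \<le> nat (gcd m (int q))"
proof -
  define g where "g = gcd m (int q)"
  define h where "h = int q div g"
  have g0: "g > 0" unfolding g_def using q by simp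
  have qgh: "int q = g * h" unfolding h_def g_def by simp
  have h0: "h > 0" using qgh g0 q by (metis zero_less_mult_pos of_nat_0_less_iff)
  obtain m' where m': "m = g * m'" unfolding g_def by (meson gcd_dvd1 dvdE)
  have cop: "coprime m' h"
  proof -
    have "gcd m (int q) = g * gcd m' h" using m' qgh g0 by (simp add: gcd_mult_left)
    then have "gcd m' h = 1" using g0 q unfolding g_def by auto
    then show ?thesis by (simp add: coprime_iff_gcd_eq_1)
  qed
  have "card {s\<in>{0..<int q}. int q dvd (m * s + cc)} \<le> card {0..<g}"
  proof (rule card_inj_on_le[where f="\<lambda>s. s div h"])
    show "inj_on (\<lambda>s. s div h) {s \<in> {0..<int q}. int q dvd (m * s + cc)}"
    proof (rule inj_onI, clarify)
      fix s1 s2 assume a: "int q dvd m * s1 + cc" "int q dvd m * s2 + cc" "s1 div h = s2 div h"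
      have "int q dvd m * (s1 - s2)" using dvd_diff[OF a(1) a(2)] by (simp add: algebra_simps)
      then have "g * h dvd g * (m' * (s1 - s2))" using qgh m' by (simp add: mult.assoc)
      then have "h dvd m' * (s1 - s2)" using g0 by simp
      then have "h dvd s1 - s2" using cop by (metis coprime_commute coprime_dvd_mult_right_iff)
      then have "s1 mod h = s2 mod h" by (simp add: mod_eq_dvd_iff)
      then show "s1 = s2" using a(3) by (metis div_mult_mod_eq)
    qed
    show "(\<lambda>s. s div h) ` {s \<in> {0..<int q}. int q dvd (m * s + cc)} \<subseteq> {0..<g}"
    proof clarify
      fix s assume s: "s \<in> {0..<int q}"
      have "(s div h) * h \<le> s" using h0 div_mult_mod_eq[of s h] pos_mod_sign[OF h0, of s] by linarith
      then have "(s div h) * h < g * h" using s qgh by (simp add: mult.commute)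
      then have "s div h < g" using h0 by simp
      moreover have "0 \<le> s div h" using s h0 by (simp add: pos_imp_zdiv_nonneg_iff)
      ultimately show "s div h \<in> {0..<g}" by simp
    qed
  qed auto
  then show ?thesis unfolding g_def by simp
qed



lemma sum_int_reindex:
  "(\<Sum>t\<in>{0..<int q}. f t) = (\<Sum>t<q. f (int t))"
proof -
  have "{0..<int q} = int ` {..<q}" using image_int_atLeastLessThan[of 0 q]
    by (simp add: atLeast0LessThan)
  then show ?thesis by (simp add: sum.reindex)
qed

lemma geo_bound:
  fixes q :: nat and L :: int assumes q: "q > 0"
  shows "norm (\<Sum>t\<in>{0..<int q}. e_q q (L * t)) \<le> real q * of_bool (int q dvd L)"
proof -
  define w where "w = exp (2 * pi * \<i> * of_int L / of_nat q)"
  have et: "e_q q (L * int t) = w ^ t" for t :: nat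
  proof -
    have eq: "2 * pi * \<i> * of_int (L * int t) / of_nat q = of_nat t * (2 * pi * \<i> * of_int L / of_nat q)"
      by (simp add: field_simps)
    show ?thesis unfolding e_q_def w_def exp_of_nat_mult[symmetric] eq by (rule refl)
  qed
  have s: "(\<Sum>t\<in>{0..<int q}. e_q q (L * t)) = (\<Sum>t<q. w ^ t)"
    by (simp add: sum_int_reindex et)
  show ?thesis
  proof (cases "int q dvd L")
    case True
    then obtain m where m: "L = int q * m" by blast
    have "w = exp ((2 * of_int m * pi) * \<i>)" unfolding w_def m using q
      by (simp add: field_simps)
    also have "\<dots> = 1" by (rule exp_integer_2pi) simp
    finally have "w = 1" .
    then show ?thesis using True s by simp
  next
    case False
    have w1: "w \<noteq> 1"
    proof
      assume "w = 1"
      then obtain n :: int where "Im (2 * pi * \<i> * of_int L / of_nat q) = of_int (2 * n) * pi"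
        unfolding w_def exp_eq_1 by blast
      then have "2 * pi * of_int L / real q = 2 * of_int n * pi" by simp
      then have "of_int L = real q * of_int n" using q by (simp add: field_simps)
      then have "L = int q * n" by (metis of_int_eq_iff of_int_mult of_int_of_nat_eq)
      then show False using False by simp
    qed
    have wq: "w ^ q = 1"
    proof -
      have "w ^ q = exp (of_nat q * (2 * pi * \<i> * of_int L / of_nat q))"
        unfolding w_def exp_of_nat_mult[symmetric] by (rule refl)
      also have "\<dots> = exp ((2 * of_int L * pi) * \<i>)" using q by (simp add: field_simps)
      also have "\<dots> = 1" by (rule exp_integer_2pi) simp
      finally show ?thesis .
    qed
    have "(\<Sum>t<q. w ^ t) = 0" using w1 wq by (simp add: sum_gp_strict)
    then show ?thesis using s False by simp
  qed
qed

lemma Sq_bound: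
  fixes q n :: nat and a a' c :: "nat \<Rightarrow> int" assumes q: "q > 0"
  shows "norm (S_q q n a a' c) \<le>
    (\<Sum>d\<in>units_mod q. \<Prod>k\<le>n. real q * of_bool (int q dvd (d * a k * a' k + c k)))"
proof -
  have inner: "(\<Sum>b\<in>PiE {..n} (\<lambda>_. {0..<int q}).
        e_q q (d * (\<Sum>k\<le>n. a k * a' k * b k) + (\<Sum>k\<le>n. c k * b k)))
      = (\<Prod>k\<le>n. \<Sum>t\<in>{0..<int q}. e_q q ((d * a k * a' k + c k) * t))" for d
  proof -
    have arg: "d * (\<Sum>k\<le>n. a k * a' k * b k) + (\<Sum>k\<le>n. c k * b k)
        = (\<Sum>k\<le>n. (d * a k * a' k + c k) * b k)" for b :: "nat \<Rightarrow> int"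
      by (simp add: sum_distrib_left sum.distrib[symmetric] algebra_simps)
    have ex: "e_q q (\<Sum>k\<le>n. X k) = (\<Prod>k\<le>n. e_q q (X k))" for X :: "nat \<Rightarrow> int"
      unfolding e_q_def by (simp add: sum_divide_distrib sum_distrib_left exp_sum)
    show ?thesis unfolding arg ex
      by (rule prod_sum_PiE[symmetric]) auto
  qed
  have "norm (S_q q n a a' c) \<le> (\<Sum>d\<in>units_mod q.
      norm (\<Prod>k\<le>n. \<Sum>t\<in>{0..<int q}. e_q q ((d * a k * a' k + c k) * t)))"
    unfolding S_q_def inner by (rule norm_sum)
  also have "\<dots> \<le> (\<Sum>d\<in>units_mod q. \<Prod>k\<le>n. real q * of_bool (int q dvd (d * a k * a' k + c k)))"
  proof (intro sum_mono)
    fix d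
    show "norm (\<Prod>k\<le>n. \<Sum>t\<in>{0..<int q}. e_q q ((d * a k * a' k + c k) * t))
       \<le> (\<Prod>k\<le>n. real q * of_bool (int q dvd (d * a k * a' k + c k)))"
      unfolding prod_norm[symmetric]
      by (intro prod_mono conjI norm_ge_zero geo_bound q)
  qed
  finally show ?thesis .
qed



definition Wr :: "nat \<Rightarrow> real" where "Wr q = real (\<Sum>t<q. gcd t q)"

lemma Wr_ge: "q > 0 \<Longrightarrow> real q \<le> Wr q"
proof -
  assume q: "q > 0"
  have "gcd 0 q \<le> (\<Sum>t<q. gcd t q)"
    by (rule member_le_sum) (use q in auto)
  then have "q \<le> (\<Sum>t<q. gcd t q)" by simp
  then show ?thesis unfolding Wr_def by (simp only: of_nat_le_iff)
qed

lemma sum_of_bool_card: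
  "finite A \<Longrightarrow> (\<Sum>s\<in>A. (of_bool (P s) :: real)) = real (card {s\<in>A. P s})"
proof -
  assume fA: "finite A"
  have "(\<Sum>s\<in>A. (of_bool (P s) :: real)) = (\<Sum>s\<in>A. if P s then 1 else 0)"
    by (intro sum.cong) auto
  also have "\<dots> = (\<Sum>s\<in>{s\<in>A. P s}. 1)" by (rule sum.inter_filter[symmetric]) (use fA in simp)
  also have "\<dots> = real (card {s\<in>A. P s})" by simp
  finally show ?thesis .
qed

lemma pair_bound:
  fixes q :: nat and d ck :: int assumes q: "q > 0" and cop: "coprime d (int q)"
  shows "(\<Sum>s\<in>{0..<int q}. \<Sum>t\<in>{0..<int q}. (of_bool (int q dvd (d * t * s + ck)) :: real)) \<le> Wr q"
proof -
  have "(\<Sum>s\<in>{0..<int q}. \<Sum>t\<in>{0..<int q}. (of_bool (int q dvd (d * t * s + ck)) :: real))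
     = (\<Sum>t\<in>{0..<int q}. \<Sum>s\<in>{0..<int q}. (of_bool (int q dvd ((d * t) * s + ck)) :: real))"
    by (rule sum.swap)
  also have "\<dots> \<le> (\<Sum>t\<in>{0..<int q}. real_of_int (gcd t (int q)))"
  proof (intro sum_mono)
    fix t
    have "(\<Sum>s\<in>{0..<int q}. (of_bool (int q dvd ((d * t) * s + ck)) :: real))
        = real (card {s\<in>{0..<int q}. int q dvd ((d * t) * s + ck)})"
      by (rule sum_of_bool_card) simp
    also have "\<dots> \<le> real (nat (gcd (d * t) (int q)))"
      using count_lin_cong[OF q, of "d*t" ck] of_nat_le_iff by blast
    also have "gcd (d * t) (int q) = gcd t (int q)"
      using cop by (metis gcd_mult_left_left_cancel coprime_commute)
    finally show "(\<Sum>s\<in>{0..<int q}. (of_bool (int q dvd ((d * t) * s + ck)) :: real))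
        \<le> real_of_int (gcd t (int q))" by simp
  qed
  also have "\<dots> = (\<Sum>t<q. real_of_int (gcd (int t) (int q)))" by (rule sum_int_reindex)
  also have "\<dots> = Wr q" unfolding Wr_def of_nat_sum
    by (intro sum.cong refl) (simp only: gcd_int_int_eq of_int_of_nat_eq)
  finally show ?thesis .
qed



lemma stepA:
  fixes q n i0 j0 :: nat and d X Y :: int and c a' :: "nat \<Rightarrow> int"
  assumes q: "q > 0" and i0: "i0 \<le> n" and j0: "j0 \<le> n"
  defines "R \<equiv> {0..<int q}"
  defines "g \<equiv> \<lambda>k s. if k = j0 then real q else if k = i0 then 1
                  else (\<Sum>t\<in>R. (of_bool (int q dvd (d * t * s + c k)) :: real))"
  shows "(\<Sum>a\<in>PiE ({..n} - {i0}) (\<lambda>_. R).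
            \<Prod>k\<le>n. (of_bool (int q dvd (d * (a(i0 := X)) k * (a'(j0 := Y)) k + c k)) :: real))
         \<le> (\<Prod>k\<in>{..n} - {i0}. g k (a' k))"
proof -
  define f where "f = (\<lambda>k u. if k = j0 then 1 else (of_bool (int q dvd (d * u * a' k + c k)) :: real))"
  have "(\<Sum>a\<in>PiE ({..n} - {i0}) (\<lambda>_. R).
            \<Prod>k\<le>n. (of_bool (int q dvd (d * (a(i0 := X)) k * (a'(j0 := Y)) k + c k)) :: real))
      \<le> (\<Sum>a\<in>PiE ({..n} - {i0}) (\<lambda>_. R). \<Prod>k\<in>{..n} - {i0}. f k (a k))"
  proof (intro sum_mono)
    fix a :: "nat \<Rightarrow> int"
    let ?h = "\<lambda>k. (of_bool (int q dvd (d * (a(i0 := X)) k * (a'(j0 := Y)) k + c k)) :: real)"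
    have "(\<Prod>k\<le>n. ?h k) = ?h i0 * (\<Prod>k\<in>{..n} - {i0}. ?h k)"
      using i0 by (simp add: prod.remove)
    also have "\<dots> \<le> 1 * (\<Prod>k\<in>{..n} - {i0}. ?h k)"
      by (intro mult_right_mono prod_nonneg) auto
    also have "\<dots> \<le> (\<Prod>k\<in>{..n} - {i0}. f k (a k))"
      unfolding mult_1_left
    proof (intro prod_mono)
      fix k assume k: "k \<in> {..n} - {i0}"
      then have ki: "k \<noteq> i0" by simp
      show "0 \<le> ?h k \<and> ?h k \<le> f k (a k)"
      proof (cases "k = j0")
        case True then show ?thesis unfolding f_def by simp
      next
        case False then show ?thesis unfolding f_def using ki by simp
      qed
    qed
    finally show "(\<Prod>k\<le>n. ?h k) \<le> (\<Prod>k\<in>{..n} - {i0}. f k (a k))" .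
  qed
  also have "\<dots> = (\<Prod>k\<in>{..n} - {i0}. \<Sum>u\<in>R. f k u)"
    by (rule prod_sum_PiE[symmetric]) (auto simp: R_def)
  also have "\<dots> = (\<Prod>k\<in>{..n} - {i0}. g k (a' k))"
  proof (intro prod.cong refl)
    fix k assume k: "k \<in> {..n} - {i0}"
    show "(\<Sum>u\<in>R. f k u) = g k (a' k)"
    proof (cases "k = j0")
      case True then show ?thesis unfolding f_def g_def by (simp add: R_def)
    next
      case False then show ?thesis using k unfolding f_def g_def by simp
    qed
  qed
  finally show ?thesis .
qed



lemma inner_bound:
  fixes q n i0 j0 :: nat and d X Y :: int and c :: "nat \<Rightarrow> int"
  assumes q: "q > 0" and i0: "i0 \<le> n" and j0: "j0 \<le> n" and cop: "coprime d (int q)"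
  shows "(\<Sum>a\<in>PiE ({..n} - {i0}) (\<lambda>_. {0..<int q}). \<Sum>a'\<in>PiE ({..n} - {j0}) (\<lambda>_. {0..<int q}).
            \<Prod>k\<le>n. (of_bool (int q dvd (d * (a(i0 := X)) k * (a'(j0 := Y)) k + c k)) :: real))
         \<le> real q * Wr q ^ n"
proof -
  define R where "R = {0..<int q}"
  define g where "g = (\<lambda>k s. if k = j0 then real q else if k = i0 then 1
                  else (\<Sum>t\<in>R. (of_bool (int q dvd (d * t * s + c k)) :: real)))"
  have gnn: "g k s \<ge> 0" for k s unfolding g_def by (auto intro: sum_nonneg)
  have "(\<Sum>a\<in>PiE ({..n} - {i0}) (\<lambda>_. R). \<Sum>a'\<in>PiE ({..n} - {j0}) (\<lambda>_. R).
            \<Prod>k\<le>n. (of_bool (int q dvd (d * (a(i0 := X)) k * (a'(j0 := Y)) k + c k)) :: real))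
      = (\<Sum>a'\<in>PiE ({..n} - {j0}) (\<lambda>_. R). \<Sum>a\<in>PiE ({..n} - {i0}) (\<lambda>_. R).
            \<Prod>k\<le>n. (of_bool (int q dvd (d * (a(i0 := X)) k * (a'(j0 := Y)) k + c k)) :: real))"
    by (rule sum.swap)
  also have "\<dots> \<le> (\<Sum>a'\<in>PiE ({..n} - {j0}) (\<lambda>_. R). \<Prod>k\<in>{..n} - {i0}. g k (a' k))"
    unfolding R_def g_def by (intro sum_mono stepA q i0 j0)
  also have "\<dots> \<le> (\<Sum>a'\<in>PiE ({..n} - {j0}) (\<lambda>_. R). real q * (\<Prod>k\<in>{..n} - {j0}. g k (a' k)))"
  proof (intro sum_mono)
    fix a' :: "nat \<Rightarrow> int"
    have "(\<Prod>k\<in>{..n} - {i0}. g k (a' k)) = 1 * (\<Prod>k\<in>{..n} - {i0}. g k (a' k))" by simp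
    also have "\<dots> \<le> g i0 (a' i0) * (\<Prod>k\<in>{..n} - {i0}. g k (a' k))"
      using q by (intro mult_right_mono prod_nonneg gnn) (auto simp: g_def)
    also have "\<dots> = (\<Prod>k\<le>n. g k (a' k))" using i0 by (simp add: prod.remove)
    also have "\<dots> = g j0 (a' j0) * (\<Prod>k\<in>{..n} - {j0}. g k (a' k))" using j0 by (simp add: prod.remove)
    also have "\<dots> = real q * (\<Prod>k\<in>{..n} - {j0}. g k (a' k))" by (simp add: g_def)
    finally show "(\<Prod>k\<in>{..n} - {i0}. g k (a' k)) \<le> real q * (\<Prod>k\<in>{..n} - {j0}. g k (a' k))" .
  qed
  also have "\<dots> = real q * (\<Sum>a'\<in>PiE ({..n} - {j0}) (\<lambda>_. R). \<Prod>k\<in>{..n} - {j0}. g k (a' k))"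
    by (simp add: sum_distrib_left)
  also have "(\<Sum>a'\<in>PiE ({..n} - {j0}) (\<lambda>_. R). \<Prod>k\<in>{..n} - {j0}. g k (a' k))
      = (\<Prod>k\<in>{..n} - {j0}. \<Sum>s\<in>R. g k s)"
    by (rule prod_sum_PiE[symmetric]) (auto simp: R_def)
  also have "\<dots> \<le> (\<Prod>k\<in>{..n} - {j0}. Wr q)"
  proof (intro prod_mono conjI)
    fix k assume k: "k \<in> {..n} - {j0}"
    show "0 \<le> (\<Sum>s\<in>R. g k s)" by (intro sum_nonneg gnn)
    show "(\<Sum>s\<in>R. g k s) \<le> Wr q"
    proof (cases "k = i0")
      case True
      then have "(\<Sum>s\<in>R. g k s) = real q" using k by (simp add: g_def R_def)
      then show ?thesis using Wr_ge[OF q] by simp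
    next
      case False
      then have "(\<Sum>s\<in>R. g k s) = (\<Sum>s\<in>R. \<Sum>t\<in>R. (of_bool (int q dvd (d * t * s + c k)) :: real))"
        using k by (simp add: g_def)
      also have "\<dots> \<le> Wr q" unfolding R_def by (rule pair_bound[OF q cop])
      finally show ?thesis .
    qed
  qed
  also have "\<dots> = Wr q ^ n" using j0 by simp
  finally show ?thesis
    using q unfolding R_def by (simp add: mult_left_mono)
qed



theorem mainTheorem4:
  fixes n :: nat and \<eta> :: real
  assumes "n \<ge> 2" and "\<eta> > 0"
  shows "\<exists>C. \<forall>(i0::nat) (j0::nat) (x::int) (y::int) (c::nat \<Rightarrow> int) (q::nat).
           i0 \<le> n \<longrightarrow> j0 \<le> n \<longrightarrow> q \<ge> 1 \<longrightarrow>
           (\<Sum>a\<in>PiE ({..n} - {i0}) (\<lambda>_. {0..<int q}).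
              \<Sum>a'\<in>PiE ({..n} - {j0}) (\<lambda>_. {0..<int q}).
                 norm (S_q q n (a(i0 := x mod int q)) (a'(j0 := y mod int q)) c))
           \<le> C * real q powr (3 + 2 * real n + \<eta>)"
proof -
  have n0: "real n > 0" using assms by simp
  define \<epsilon> where "\<epsilon> = \<eta> / real n"
  have eps: "\<epsilon> > 0" using n0 assms unfolding \<epsilon>_def by simp
  have neps: "real n * \<epsilon> = \<eta>" using n0 unfolding \<epsilon>_def by simp
  obtain Ct where Ct1: "Ct \<ge> 1" and Ct: "\<And>q. q > 0 \<Longrightarrow> real (card {d. d dvd q}) \<le> Ct * real q powr \<epsilon>"
    using tau_bound[OF eps] by blast
  show ?thesis
  proof (intro exI[of _ "Ct ^ n"] allI impI)
    fix i0 j0 :: nat and x y :: int and c :: "nat \<Rightarrow> int" and q :: nat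
    assume i0: "i0 \<le> n" and j0: "j0 \<le> n" and q1: "q \<ge> 1"
    have q: "q > 0" using q1 by simp
    define U where "U = units_mod q"
    define A where "A = PiE ({..n} - {i0}) (\<lambda>_. {0..<int q})"
    define A' where "A' = PiE ({..n} - {j0}) (\<lambda>_. {0..<int q})"
    define X where "X = x mod int q"
    define Y where "Y = y mod int q"
    define P where "P = (\<lambda>d a a'. \<Prod>k\<le>n. (of_bool (int q dvd (d * (a(i0 := X)) k * (a'(j0 := Y)) k + c k)) :: real))"
    have "(\<Sum>a\<in>A. \<Sum>a'\<in>A'. norm (S_q q n (a(i0 := X)) (a'(j0 := Y)) c))
        \<le> (\<Sum>a\<in>A. \<Sum>a'\<in>A'. \<Sum>d\<in>U. real q ^ (n+1) * P d a a')"
    proof (intro sum_mono)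
      fix a a'
      have "norm (S_q q n (a(i0 := X)) (a'(j0 := Y)) c) \<le>
        (\<Sum>d\<in>units_mod q. \<Prod>k\<le>n. real q * of_bool (int q dvd (d * (a(i0 := X)) k * (a'(j0 := Y)) k + c k)))"
        by (rule Sq_bound[OF q])
      also have "\<dots> = (\<Sum>d\<in>U. real q ^ (n+1) * P d a a')"
        unfolding U_def P_def by (simp add: prod.distrib)
      finally show "norm (S_q q n (a(i0 := X)) (a'(j0 := Y)) c) \<le> (\<Sum>d\<in>U. real q ^ (n+1) * P d a a')" .
    qed
    also have "\<dots> = (\<Sum>a\<in>A. \<Sum>d\<in>U. \<Sum>a'\<in>A'. real q ^ (n+1) * P d a a')"
      by (intro sum.cong refl sum.swap)
    also have "\<dots> = (\<Sum>d\<in>U. \<Sum>a\<in>A. \<Sum>a'\<in>A'. real q ^ (n+1) * P d a a')"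
      by (rule sum.swap)
    also have "\<dots> = (\<Sum>d\<in>U. real q ^ (n+1) * (\<Sum>a\<in>A. \<Sum>a'\<in>A'. P d a a'))"
      by (simp add: sum_distrib_left)
    also have "\<dots> \<le> (\<Sum>d\<in>U. real q ^ (n+1) * (real q * Wr q ^ n))"
    proof (intro sum_mono mult_left_mono)
      fix d assume d: "d \<in> U"
      then have cop: "coprime d (int q)" unfolding U_def units_mod_def by simp
      show "(\<Sum>a\<in>A. \<Sum>a'\<in>A'. P d a a') \<le> real q * Wr q ^ n"
        unfolding A_def A'_def P_def by (rule inner_bound[OF q i0 j0 cop])
    qed simp
    also have "\<dots> = real (card U) * (real q ^ (n+1) * (real q * Wr q ^ n))" by simp
    also have "\<dots> \<le> real q * (real q ^ (n+1) * (real q * Wr q ^ n))"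
    proof (intro mult_right_mono)
      have "card U \<le> card {0..<int q}" unfolding U_def units_mod_def by (intro card_mono) auto
      then show "real (card U) \<le> real q" by simp
      have "Wr q \<ge> 0" using Wr_ge[OF q] by simp
      then show "0 \<le> real q ^ (n+1) * (real q * Wr q ^ n)" by simp
    qed
    also have "\<dots> = real q ^ (n+3) * Wr q ^ n" by (simp add: power_add power3_eq_cube algebra_simps)
    also have "\<dots> \<le> real q ^ (n+3) * (real q * (Ct * real q powr \<epsilon>)) ^ n"
    proof (intro mult_left_mono power_mono)
      have "real (\<Sum>t<q. gcd t q) \<le> real (q * card {d. d dvd q})"
        using gcd_sum_nat[OF q] of_nat_le_iff by blast
      also have "\<dots> = real q * real (card {d. d dvd q})" by simp
      also have "\<dots> \<le> real q * (Ct * real q powr \<epsilon>)" using Ct[OF q] by (intro mult_left_mono) auto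
      finally show "Wr q \<le> real q * (Ct * real q powr \<epsilon>)" unfolding Wr_def .
      show "0 \<le> Wr q" using Wr_ge[OF q] by simp
    qed simp
    also have "\<dots> = Ct ^ n * (real q ^ (2*n+3) * (real q powr \<epsilon>) ^ n)"
    proof -
      have "2*n+3 = (n+3)+n" by simp
      then have e: "real q ^ (2*n+3) = real q ^ (n+3) * real q ^ n" by (simp only: power_add)
      show ?thesis unfolding e by (simp add: power_mult_distrib algebra_simps)
    qed
    also have "(real q powr \<epsilon>) ^ n = real q powr \<eta>" using q neps by (simp add: powr_power)
    also have "real q ^ (2*n+3) * real q powr \<eta> = real q powr (3 + 2 * real n + \<eta>)"
    proof -
      have "real q powr (3 + 2 * real n + \<eta>) = real q powr (real (2*n+3)) * real q powr \<eta>"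
        by (simp add: powr_add[symmetric] algebra_simps)
      also have "real q powr (real (2*n+3)) = real q ^ (2*n+3)" using q by (intro powr_realpow) simp
      finally show ?thesis by simp
    qed
    finally show "(\<Sum>a\<in>PiE ({..n} - {i0}) (\<lambda>_. {0..<int q}).
              \<Sum>a'\<in>PiE ({..n} - {j0}) (\<lambda>_. {0..<int q}).
                 norm (S_q q n (a(i0 := x mod int q)) (a'(j0 := y mod int q)) c))
           \<le> Ct ^ n * real q powr (3 + 2 * real n + \<eta>)"
      unfolding A_def A'_def X_def Y_def .
  qed
qed


end
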